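(* Let $P$ be a poset and $X$ an antichain of $P$. The following are equivalent: (i) $X$ is the minimum of $AM(P)$; (ii) $X$ is a minimal element of $AM(P)$; (iii) $P=\uparrow X$.
   Context: $AM(P)$ is the set of maximal antichains of $P$ ordered by domination: $Y\leq Z$ iff for every $y\in Y$ there is $z\in Z$ with $y\leq z$. $\uparrow X=\{y\in P: x\leq y\text{ for some }x\in X\}$. *)

theory Defs
  imports Main
begin

text \<open>A poset is a carrier set P inside a type with a partial order (class order);
  the order on P is the restriction of the type's order.\<close>

definition antichain :: "'a::order set \<Rightarrow> 'a set \<Rightarrow> bool" where
  "antichain P X \<longleftrightarrow> X \<subseteq> P \<and> (\<forall>x\<in>X. \<forall>y\<in>X. x \<le> y \<longrightarrow> x = y)"

definition maximal_antichain :: "'a::order set \<Rightarrow> 'a set \<Rightarrow> bool" where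
  "maximal_antichain P X \<longleftrightarrow> antichain P X \<and> (\<forall>Y. antichain P Y \<and> X \<subseteq> Y \<longrightarrow> Y = X)"

definition AM :: "'a::order set \<Rightarrow> 'a set set" where
  "AM P = {X. maximal_antichain P X}"

definition dom_le :: "'a::order set \<Rightarrow> 'a set \<Rightarrow> bool" where
  "dom_le Y Z \<longleftrightarrow> (\<forall>y\<in>Y. \<exists>z\<in>Z. y \<le> z)"

definition up_set :: "'a::order set \<Rightarrow> 'a set \<Rightarrow> 'a set" where
  "up_set P X = {y\<in>P. \<exists>x\<in>X. x \<le> y}"

end

theory Submission
  imports Defs
begin

lemma max_comparable:
  assumes "maximal_antichain P X" "q \<in> P"
  shows "\<exists>x\<in>X. x \<le> q \<or> q \<le> x"
proof (rule ccontr)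
  assume n: "\<not> ?thesis"
  have "antichain P (insert q X)" using assms n
    unfolding maximal_antichain_def antichain_def by blast
  then have "insert q X = X" using assms(1) unfolding maximal_antichain_def by blast
  then show False using n by blast
qed

lemma antichain_exists_max:
  fixes D :: "'a::order set"
  shows "\<exists>M. antichain D M \<and> (\<forall>Y. antichain D Y \<and> M \<subseteq> Y \<longrightarrow> Y = M)"
proof -
  have "\<forall>C\<in>chains {M. antichain D M}. \<Union>C \<in> {M. antichain D M}"
  proof
    fix C assume C: "C \<in> chains {M. antichain D M}"
    show "\<Union>C \<in> {M. antichain D M}"
      unfolding mem_Collect_eq antichain_def
    proof
      show "\<Union>C \<subseteq> D" using C unfolding chains_def antichain_def by blast
      show "\<forall>x\<in>\<Union>C. \<forall>y\<in>\<Union>C. x \<le> y \<longrightarrow> x = y"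
      proof (intro ballI impI)
        fix x y assume "x \<in> \<Union>C" "y \<in> \<Union>C" "x \<le> y"
        then obtain A B where AB: "A \<in> C" "B \<in> C" "x \<in> A" "y \<in> B" by blast
        from C AB have "A \<subseteq> B \<or> B \<subseteq> A" unfolding chains_def chain_subset_def by blast
        moreover have "antichain D A" "antichain D B" using C AB unfolding chains_def by auto
        ultimately show "x = y" using AB \<open>x \<le> y\<close> unfolding antichain_def by blast
      qed
    qed
  qed
  from Zorn_Lemma[OF this] show ?thesis by auto
qed

theorem lemma5p1:
  fixes P X :: "'a::order set"
  assumes "antichain P X"
  shows "((X \<in> AM P \<and> (\<forall>Y\<in>AM P. dom_le X Y))
          \<longleftrightarrow> (X \<in> AM P \<and> (\<forall>Y\<in>AM P. dom_le Y X \<longrightarrow> Y = X)))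
       \<and> ((X \<in> AM P \<and> (\<forall>Y\<in>AM P. dom_le Y X \<longrightarrow> Y = X))
          \<longleftrightarrow> P = up_set P X)"
proof -
  have XP: "X \<subseteq> P" and XA: "\<forall>x\<in>X. \<forall>y\<in>X. x \<le> y \<longrightarrow> x = y"
    using assms unfolding antichain_def by auto
  have antisym: "Y = Z" if hYZ: "Y \<in> AM P" "Z \<in> AM P" "dom_le Y Z" "dom_le Z Y" for Y Z
  proof -
    have aY: "\<forall>x\<in>Y. \<forall>y\<in>Y. x \<le> y \<longrightarrow> x = y" and aZ: "\<forall>x\<in>Z. \<forall>y\<in>Z. x \<le> y \<longrightarrow> x = y"
      using hYZ unfolding AM_def maximal_antichain_def antichain_def by auto
    have "Y \<subseteq> Z"
    proof
      fix y assume "y \<in> Y"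
      then obtain z where z: "z \<in> Z" "y \<le> z" using hYZ(3) unfolding dom_le_def by blast
      then obtain y' where "y' \<in> Y" "z \<le> y'" using hYZ(4) unfolding dom_le_def by blast
      then have "y = y'" using aY \<open>y \<in> Y\<close> z order_trans by blast
      then have "y = z" using z \<open>z \<le> y'\<close> by auto
      then show "y \<in> Z" using z by simp
    qed
    moreover have "Z \<subseteq> Y"
    proof
      fix y assume "y \<in> Z"
      then obtain z where z: "z \<in> Y" "y \<le> z" using hYZ(4) unfolding dom_le_def by blast
      then obtain y' where "y' \<in> Z" "z \<le> y'" using hYZ(3) unfolding dom_le_def by blast
      then have "y = y'" using aZ \<open>y \<in> Z\<close> z order_trans by blast
      then have "y = z" using z \<open>z \<le> y'\<close> by auto
      then show "y \<in> Y" using z by simp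
    qed
    ultimately show ?thesis by auto
  qed
  have i_ii: "(X \<in> AM P \<and> (\<forall>Y\<in>AM P. dom_le Y X \<longrightarrow> Y = X))"
    if "X \<in> AM P" "\<forall>Y\<in>AM P. dom_le X Y" using that antisym by blast
  have iii_i: "X \<in> AM P \<and> (\<forall>Y\<in>AM P. dom_le X Y)" if up: "P = up_set P X"
  proof
    show XAM: "X \<in> AM P"
      unfolding AM_def mem_Collect_eq maximal_antichain_def
    proof (intro conjI assms allI impI)
      fix Y assume Y: "antichain P Y \<and> X \<subseteq> Y"
      show "Y = X"
      proof
        show "Y \<subseteq> X"
        proof
          fix y assume "y \<in> Y"
          then have "y \<in> up_set P X" using Y up unfolding antichain_def by blast
          then obtain x where "x \<in> X" "x \<le> y" unfolding up_set_def by blast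
          then have "x = y" using Y \<open>y \<in> Y\<close> unfolding antichain_def by blast
          then show "y \<in> X" using \<open>x \<in> X\<close> by simp
        qed
      qed (use Y in auto)
    qed
    show "\<forall>Y\<in>AM P. dom_le X Y"
    proof
      fix Y assume YAM: "Y \<in> AM P"
      show "dom_le X Y" unfolding dom_le_def
      proof
        fix x assume "x \<in> X"
        then obtain y where y: "y \<in> Y" "x \<le> y \<or> y \<le> x"
          using max_comparable[of P Y x] YAM XP unfolding AM_def by blast
        show "\<exists>z\<in>Y. x \<le> z"
        proof (cases "x \<le> y")
          case True then show ?thesis using y by blast
        next
          case False
          then have "y < x" using y by auto
          have "y \<in> P" using YAM y unfolding AM_def maximal_antichain_def antichain_def by blast
          then obtain x' where "x' \<in> X" "x' \<le> y" using up unfolding up_set_def by blast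
          then have "x' = x" using XA \<open>x \<in> X\<close> \<open>y < x\<close> by (meson less_imp_le order_trans)
          then show ?thesis using \<open>x' \<le> y\<close> \<open>y < x\<close> by auto
        qed
      qed
    qed
  qed
  have ii_iii: "P = up_set P X" if XAM: "X \<in> AM P" and mn: "\<forall>Y\<in>AM P. dom_le Y X \<longrightarrow> Y = X"
  proof (rule ccontr)
    assume "P \<noteq> up_set P X"
    then obtain p where p: "p \<in> P" "p \<notin> up_set P X" unfolding up_set_def by blast
    define D where "D = P - up_set P X"
    obtain M where M: "antichain D M" and Mmax: "\<forall>Y. antichain D Y \<and> M \<subseteq> Y \<longrightarrow> Y = M"
      using antichain_exists_max[of D] by blast
    have MD: "M \<subseteq> D" using M unfolding antichain_def by auto
    have MA: "\<forall>x\<in>M. \<forall>y\<in>M. x \<le> y \<longrightarrow> x = y" using M unfolding antichain_def by auto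
    have Mne: "M \<noteq> {}"
    proof
      assume "M = {}"
      have "antichain D {p}" using p unfolding D_def antichain_def by auto
      then have "{p} = M" using Mmax \<open>M = {}\<close> by blast
      then show False using \<open>M = {}\<close> by auto
    qed
    have Xmax: "maximal_antichain P X" using XAM unfolding AM_def by auto
    have Mbelow: "\<exists>x\<in>X. m < x" if "m \<in> M" for m
    proof -
      have mD: "m \<in> P" "m \<notin> up_set P X" using that MD unfolding D_def by auto
      then obtain x where "x \<in> X" "x \<le> m \<or> m \<le> x" using max_comparable[OF Xmax] by blast
      then show ?thesis using mD unfolding up_set_def by (auto simp: order.order_iff_strict)
    qed
    have Dcomp: "\<exists>m\<in>M. m \<le> q \<or> q \<le> m" if "q \<in> D" for q
      using max_comparable[of D M q] M Mmax that unfolding maximal_antichain_def by blast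
    define Y where "Y = M \<union> {x\<in>X. \<forall>m\<in>M. \<not> m \<le> x}"
    have YAM: "Y \<in> AM P"
      unfolding AM_def mem_Collect_eq
    proof -
      have anti: "antichain P Y"
        unfolding antichain_def
      proof (intro conjI ballI impI)
        show "Y \<subseteq> P" using MD XP unfolding Y_def D_def by auto
      next
        fix a b assume ab: "a \<in> Y" "b \<in> Y" "a \<le> b"
        show "a = b"
        proof (cases "a \<in> M")
          case True
          then show ?thesis
          proof (cases "b \<in> M")
            case True then show ?thesis using MA \<open>a \<in> M\<close> ab by blast
          next
            case False then have "b \<in> X" "\<forall>m\<in>M. \<not> m \<le> b" using ab unfolding Y_def by auto
            then show ?thesis using \<open>a \<in> M\<close> ab by blast
          qed
        next
          case False
          then have aX: "a \<in> X" using ab unfolding Y_def by auto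
          show ?thesis
          proof (cases "b \<in> M")
            case True
            then have "b \<in> P" "b \<notin> up_set P X" using MD unfolding D_def by auto
            then show ?thesis using aX ab unfolding up_set_def by auto
          next
            case False then have "b \<in> X" using ab unfolding Y_def by auto
            then show ?thesis using XA aX ab by blast
          qed
        qed
      qed
      show "maximal_antichain P Y"
        unfolding maximal_antichain_def
      proof (intro conjI anti allI impI)
        fix Z assume Z: "antichain P Z \<and> Y \<subseteq> Z"
        have ZA: "\<forall>x\<in>Z. \<forall>y\<in>Z. x \<le> y \<longrightarrow> x = y" and ZP: "Z \<subseteq> P"
          using Z unfolding antichain_def by auto
        show "Z = Y"
        proof
          show "Z \<subseteq> Y"
          proof
            fix q assume "q \<in> Z"
            show "q \<in> Y"
            proof (cases "q \<in> D")
              case True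
              then obtain m where m: "m \<in> M" "m \<le> q \<or> q \<le> m" using Dcomp by blast
              then have "m \<in> Z" using Z unfolding Y_def by auto
              then have "m = q" using ZA m \<open>q \<in> Z\<close> by blast
              then show ?thesis using m unfolding Y_def by auto
            next
              case False
              then obtain x where x: "x \<in> X" "x \<le> q" using ZP \<open>q \<in> Z\<close> unfolding D_def up_set_def by auto
              show ?thesis
              proof (cases "\<forall>m\<in>M. \<not> m \<le> x")
                case True
                then have "x \<in> Y" using x unfolding Y_def by auto
                then have "x = q" using ZA Z x \<open>q \<in> Z\<close> by blast
                then show ?thesis using \<open>x \<in> Y\<close> by simp
              next
                case False
                then obtain m where m: "m \<in> M" "m \<le> x" by blast
                then have "m \<in> Z" using Z unfolding Y_def by auto
                then have "m = q" using ZA m x \<open>q \<in> Z\<close> order_trans by blast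
                then show ?thesis using m unfolding Y_def by auto
              qed
            qed
          qed
        qed (use Z in auto)
      qed
    qed
    have "dom_le Y X" unfolding dom_le_def Y_def
      using Mbelow by (auto intro: less_imp_le)
    then have "Y = X" using mn YAM by blast
    moreover obtain m where "m \<in> M" using Mne by blast
    moreover have "m \<notin> X" using \<open>m \<in> M\<close> MD unfolding D_def up_set_def using XP by auto
    ultimately show False unfolding Y_def by auto
  qed
  show ?thesis
  proof (rule conjI; rule iffI)
    assume h: "X \<in> AM P \<and> (\<forall>Y\<in>AM P. dom_le X Y)"
    then show "X \<in> AM P \<and> (\<forall>Y\<in>AM P. dom_le Y X \<longrightarrow> Y = X)" using i_ii by blast
  next
    assume h: "X \<in> AM P \<and> (\<forall>Y\<in>AM P. dom_le Y X \<longrightarrow> Y = X)"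
    then show "X \<in> AM P \<and> (\<forall>Y\<in>AM P. dom_le X Y)" using ii_iii iii_i by blast
  next
    assume h: "X \<in> AM P \<and> (\<forall>Y\<in>AM P. dom_le Y X \<longrightarrow> Y = X)"
    then show "P = up_set P X" using ii_iii by blast
  next
    assume "P = up_set P X"
    then show "X \<in> AM P \<and> (\<forall>Y\<in>AM P. dom_le Y X \<longrightarrow> Y = X)" using iii_i i_ii by blast
  qed
qed

end
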